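(* In the triangle $ABC$ with $a=8$, $b=15$, and $c=\sqrt{(353+15\sqrt{93})/2}$, the triangle center $X_{18}$ coincides with vertex $A$.
   Context: $X_n$ denotes the $n$-th triangle center listed in Kimberling's Encyclopedia of Triangle Centers (ETC) ($X_{18}$ the second Napoleon point), given by barycentric coordinates in terms of $a=BC$, $b=CA$, $c=AB$. *)

theory Defs
  imports Complex_Main
begin

definition tri_area :: "real \<Rightarrow> real \<Rightarrow> real \<Rightarrow> real" where
  "tri_area a b c = sqrt ((a+b+c) * (-a+b+c) * (a-b+c) * (a+b-c)) / 4"

definition is_triangle :: "real \<Rightarrow> real \<Rightarrow> real \<Rightarrow> bool" where
  "is_triangle a b c \<longleftrightarrow> a > 0 \<and> b > 0 \<and> c > 0 \<and> a < b + c \<and> b < c + a \<and> c < a + b"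

(* X(18), second Napoleon point: trilinears csc(A - pi/6) : csc(B - pi/6) : csc(C - pi/6),
   i.e. barycentrics  1/g(a,b,c) : 1/g(b,c,a) : 1/g(c,a,b)  with
   g(a,b,c) = sqrt 3 * S - S_A,  S = 2*Area, S_A = (b^2+c^2-a^2)/2
   (since a csc(A - pi/6) = 4abc / (2 sqrt 3 S - 2 S_A)).
   Cleared of denominators (so that the case g = 0 is meaningful):
   g_B g_C : g_C g_A : g_A g_B. *)
definition x18_g :: "real \<Rightarrow> real \<Rightarrow> real \<Rightarrow> real" where
  "x18_g a b c = sqrt 3 * (2 * tri_area a b c) - (b\<^sup>2 + c\<^sup>2 - a\<^sup>2) / 2"

definition X18 :: "real \<Rightarrow> real \<Rightarrow> real \<Rightarrow> real \<times> real \<times> real" where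
  "X18 a b c =
     (let gA = x18_g a b c; gB = x18_g b c a; gC = x18_g c a b
      in (gB * gC, gC * gA, gA * gB))"

definition same_bary_point :: "real \<times> real \<times> real \<Rightarrow> real \<times> real \<times> real \<Rightarrow> bool" where
  "same_bary_point p q \<longleftrightarrow> p \<noteq> (0,0,0) \<and> q \<noteq> (0,0,0) \<and> (\<exists>t. t \<noteq> 0 \<and> p = (t * fst q, t * fst (snd q), t * snd (snd q)))"

end

theory Submission
  imports Defs
begin

theorem theorem4p2:
  fixes a b c :: real
  assumes "a = 8" and "b = 15" and "c = sqrt ((353 + 15 * sqrt 93) / 2)"
  shows "is_triangle a b c \<and> same_bary_point (X18 a b c) (1, 0, 0)"
proof -
  define r where "r = sqrt 93"
  define s where "s = (353 + 15 * r) / 2"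
  have r2: "r^2 = 93" unfolding r_def by simp
  have r0: "r > 0" unfolding r_def by simp
  have rlt: "r < 47" unfolding r_def by (rule real_less_lsqrt) auto
  have s0: "s > 64" unfolding s_def using r0 by simp
  have slt: "s < 529" unfolding s_def using rlt by simp
  have cdef: "c = sqrt s" using assms(3) unfolding s_def r_def by simp
  have c2: "c^2 = s" using cdef s0 by simp
  have c0: "c > 0" using cdef s0 by simp
  have cgt: "c > 8" unfolding cdef using s0 by (simp add: real_less_rsqrt)
  have clt: "c < 23" unfolding cdef using slt by (simp add: real_sqrt_less_iff real_less_lsqrt)
  have tri: "is_triangle a b c" unfolding is_triangle_def using assms c0 cgt clt by simp
  define P where "P = (a+b+c) * (-a+b+c) * (a-b+c) * (a+b-c)"
  have P1: "P = -(s^2) + 578*s - 25921"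
    unfolding P_def assms(1,2) c2[symmetric] by (simp add: algebra_simps power2_eq_square)
  have ss: "s^2 = 353 * s - 25921"
    unfolding s_def using r2 by (simp add: algebra_simps power2_eq_square)
  have P3: "3 * P = (161 + s)^2"
    using P1 ss by (simp add: algebra_simps power2_eq_square)
  have sq: "sqrt 3 * sqrt P = 161 + s"
    using P3 s0 by (metis real_sqrt_mult real_sqrt_abs abs_of_pos add_pos_pos zero_less_numeral order.strict_trans)
  have area: "tri_area a b c = sqrt P / 4" unfolding tri_area_def P_def by simp
  have gA: "x18_g a b c = 0"
    unfolding x18_g_def area using sq c2 assms(1,2) by (simp add: field_simps)
  have gB: "x18_g b c a = 161"
  proof -
    have "tri_area b c a = sqrt P / 4" unfolding tri_area_def P_def by (simp add: algebra_simps)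
    then show ?thesis unfolding x18_g_def using sq c2 assms(1,2) by (simp add: field_simps)
  qed
  have gC: "x18_g c a b = s - 64"
  proof -
    have "tri_area c a b = sqrt P / 4" unfolding tri_area_def P_def by (simp add: algebra_simps)
    then show ?thesis unfolding x18_g_def using sq c2 assms(1,2) by (simp add: field_simps)
  qed
  have "same_bary_point (X18 a b c) (1, 0, 0)"
    unfolding same_bary_point_def X18_def Let_def gA gB gC using s0
    by (intro conjI exI[of _ "161 * (s - 64)"]) auto
  with tri show ?thesis by simp
qed

end
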